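(* Let $\Bbbk$ be an algebraically closed field of characteristic zero, $G$ a finite group, $\chi:G\to\Bbbk^\times$ a linear character, $g\in Z(G)$, $n\geq 2$ the multiplicative order of $\chi(g)$, and $H$ the $\Bbbk$-algebra generated by $\Bbbk G$ and $z$ with relations $z^n=0$, $zs=\chi(s)sz$ ($s\in G$). Suppose $$(z^{l_1}h_1+\cdots+z^{l_t}h_t)=(z^{m_1}a_1+\cdots+z^{m_r}a_r),$$ where $n-1\geq l_1>\cdots>l_t\geq0$, $n-1\geq m_1>\cdots>m_r\geq0$, $h_i,a_j\in\Bbbk G$, $h_t\neq0$ and $a_r\neq0$. Then $l_t=m_r$ and $\langle h_t\rangle=\langle a_r\rangle$.
   Context: $(a)$ denotes the two-sided ideal of $H$ generated by $a$; for $h\in\Bbbk G$, $\langle h\rangle$ denotes the two-sided ideal of $\Bbbk G$ generated by $h$. *)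

theory Defs
  imports "HOL-Algebra.Ideal" "HOL-Computational_Algebra.Polynomial"
begin

definition mult_ord :: "'a::monoid_mult \<Rightarrow> nat" where
  "mult_ord x = (if \<exists>k>0. x ^ k = 1 then (LEAST k. k > 0 \<and> x ^ k = 1) else 0)"

definition kG_carrier :: "'g monoid \<Rightarrow> ('g \<Rightarrow> 'k::field) set" where
  "kG_carrier G = {f. \<forall>x. x \<notin> carrier G \<longrightarrow> f x = 0}"

definition kG_mult :: "'g monoid \<Rightarrow> ('g \<Rightarrow> 'k::field) \<Rightarrow> ('g \<Rightarrow> 'k) \<Rightarrow> 'g \<Rightarrow> 'k" where
  "kG_mult G f h = (\<lambda>x. if x \<in> carrier G
      then (\<Sum>y\<in>carrier G. f y * h (inv\<^bsub>G\<^esub> y \<otimes>\<^bsub>G\<^esub> x)) else 0)"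

definition group_algebra :: "'g monoid \<Rightarrow> ('g \<Rightarrow> 'k::field) ring" where
  "group_algebra G = \<lparr>carrier = kG_carrier G, monoid.mult = kG_mult G,
      one = (\<lambda>x. if x = \<one>\<^bsub>G\<^esub> then 1 else 0), zero = (\<lambda>x. 0), add = (\<lambda>f g x. f x + g x)\<rparr>"

text \<open>The algebra H generated by kG and z with z^n = 0 and z s = chi(s) s z.
  It is modelled by its normal form: H = (direct sum over i < n of z^i kG); an element
  is a coefficient function a i s = coefficient of the basis element z^i s.
  Since s z^j = chi(s)^(-j) z^j s, we have (z^i s)(z^j t) = chi(s)^(-j) z^(i+j) s t,
  which is 0 when i + j >= n.\<close>
definition H_carrier :: "'g monoid \<Rightarrow> nat \<Rightarrow> (nat \<Rightarrow> 'g \<Rightarrow> 'k::field) set" where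
  "H_carrier G n = {a. \<forall>i x. (n \<le> i \<or> x \<notin> carrier G) \<longrightarrow> a i x = 0}"

definition H_mult :: "'g monoid \<Rightarrow> ('g \<Rightarrow> 'k::field) \<Rightarrow> nat
    \<Rightarrow> (nat \<Rightarrow> 'g \<Rightarrow> 'k) \<Rightarrow> (nat \<Rightarrow> 'g \<Rightarrow> 'k) \<Rightarrow> nat \<Rightarrow> 'g \<Rightarrow> 'k" where
  "H_mult G \<chi> n a b = (\<lambda>k x. if k < n \<and> x \<in> carrier G
      then (\<Sum>i\<in>{0..k}. \<Sum>s\<in>carrier G.
              a i s * b (k - i) (inv\<^bsub>G\<^esub> s \<otimes>\<^bsub>G\<^esub> x) * inverse (\<chi> s) ^ (k - i))
      else 0)"

definition H_alg :: "'g monoid \<Rightarrow> ('g \<Rightarrow> 'k::field) \<Rightarrow> nat \<Rightarrow> (nat \<Rightarrow> 'g \<Rightarrow> 'k) ring" where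
  "H_alg G \<chi> n = \<lparr>carrier = H_carrier G n, monoid.mult = H_mult G \<chi> n,
      one = (\<lambda>i x. if i = 0 \<and> x = \<one>\<^bsub>G\<^esub> then 1 else 0), zero = (\<lambda>i x. 0), add = (\<lambda>a b i x. a i x + b i x)\<rparr>"

definition z_elem :: "'g monoid \<Rightarrow> nat \<Rightarrow> nat \<Rightarrow> 'g \<Rightarrow> 'k::field" where
  "z_elem G n = (\<lambda>i x. if i = 1 \<and> x = \<one>\<^bsub>G\<^esub> \<and> 1 < n then 1 else 0)"

definition kG_emb :: "('g \<Rightarrow> 'k::field) \<Rightarrow> nat \<Rightarrow> 'g \<Rightarrow> 'k" where
  "kG_emb h = (\<lambda>i x. if i = 0 then h x else 0)"

end

theory Submission
  imports Defs
begin

lemma sum_group_reindex: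
  assumes "group G" "u \<in> carrier G"
  shows "(\<Sum>s\<in>carrier G. f s) = (\<Sum>v\<in>carrier G. f (u \<otimes>\<^bsub>G\<^esub> v))"
proof -
  interpret group G by fact
  show ?thesis
    by (rule sum.reindex_bij_witness[where i="\<lambda>v. u \<otimes>\<^bsub>G\<^esub> v" and j="\<lambda>s. inv\<^bsub>G\<^esub> u \<otimes>\<^bsub>G\<^esub> s"])
       (use assms(2) in \<open>auto simp: m_assoc[symmetric]\<close>)
qed

lemma sum_tri:
  fixes F :: "nat \<Rightarrow> nat \<Rightarrow> 'a::comm_monoid_add"
  shows "(\<Sum>i\<in>{0..k}. \<Sum>j\<in>{0..i}. F j (i - j)) = (\<Sum>j\<in>{0..k}. \<Sum>p\<in>{0..k-j}. F j p)"
proof -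
  have "(\<Sum>i\<in>{0..k}. \<Sum>j\<in>{0..i}. F j (i - j)) = (\<Sum>(j,p)\<in>{(j,p). j+p \<le> k}. F j p)"
    using sum.triangle_reindex_eq[of F k] by (simp add: atLeast0AtMost)
  also have "{(j,p). j+p \<le> k} = Sigma {0..k} (\<lambda>j. {0..k-j})" by auto
  also have "(\<Sum>(j,p)\<in>Sigma {0..k} (\<lambda>j. {0..k-j}). F j p) = (\<Sum>j\<in>{0..k}. \<Sum>p\<in>{0..k-j}. F j p)"
    by (rule sum.Sigma[symmetric]) auto
  finally show ?thesis .
qed

lemma swap3: "(\<Sum>s\<in>B. \<Sum>u\<in>C. \<Sum>i\<in>A. f i u s) = (\<Sum>i\<in>A. \<Sum>u\<in>C. \<Sum>s\<in>B. f i u s)"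
proof -
  have "(\<Sum>s\<in>B. \<Sum>u\<in>C. \<Sum>i\<in>A. f i u s) = (\<Sum>s\<in>B. \<Sum>i\<in>A. \<Sum>u\<in>C. f i u s)"
    by (rule sum.cong[OF refl], rule sum.swap)
  also have "\<dots> = (\<Sum>i\<in>A. \<Sum>s\<in>B. \<Sum>u\<in>C. f i u s)" by (rule sum.swap)
  also have "\<dots> = (\<Sum>i\<in>A. \<Sum>u\<in>C. \<Sum>s\<in>B. f i u s)" by (rule sum.cong[OF refl], rule sum.swap)
  finally show ?thesis .
qed

lemma swap3': "(\<Sum>s\<in>B. \<Sum>i\<in>A. \<Sum>u\<in>C. f i u s) = (\<Sum>i\<in>A. \<Sum>u\<in>C. \<Sum>s\<in>B. f i u s)"
proof -
  have "(\<Sum>s\<in>B. \<Sum>i\<in>A. \<Sum>u\<in>C. f i u s) = (\<Sum>i\<in>A. \<Sum>s\<in>B. \<Sum>u\<in>C. f i u s)" by (rule sum.swap)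
  also have "\<dots> = (\<Sum>i\<in>A. \<Sum>u\<in>C. \<Sum>s\<in>B. f i u s)" by (rule sum.cong[OF refl], rule sum.swap)
  finally show ?thesis .
qed

lemma swap3'': "(\<Sum>u\<in>B. \<Sum>v\<in>C. \<Sum>p\<in>A. f p u v) = (\<Sum>p\<in>A. \<Sum>u\<in>B. \<Sum>v\<in>C. f p u v)"
proof -
  have "(\<Sum>u\<in>B. \<Sum>v\<in>C. \<Sum>p\<in>A. f p u v) = (\<Sum>u\<in>B. \<Sum>p\<in>A. \<Sum>v\<in>C. f p u v)"
    by (rule sum.cong[OF refl], rule sum.swap)
  also have "\<dots> = (\<Sum>p\<in>A. \<Sum>u\<in>B. \<Sum>v\<in>C. f p u v)" by (rule sum.swap)
  finally show ?thesis .
qed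

lemma H_assoc:
  fixes \<chi> :: "'g \<Rightarrow> 'k::field"
  assumes grp: "group G"
    and chi_hom: "\<forall>s\<in>carrier G. \<forall>u\<in>carrier G. \<chi> (s \<otimes>\<^bsub>G\<^esub> u) = \<chi> s * \<chi> u"
  shows "H_mult G \<chi> n (H_mult G \<chi> n a b) c = H_mult G \<chi> n a (H_mult G \<chi> n b c)"
proof (rule ext, rule ext)
  fix k x
  interpret group G by fact
  define \<iota> where "\<iota> = (\<lambda>s. inverse (\<chi> s))"
  have \<iota>m: "\<iota> (u \<otimes>\<^bsub>G\<^esub> v) = \<iota> u * \<iota> v" if "u \<in> carrier G" "v \<in> carrier G" for u v
    using chi_hom that by (simp add: \<iota>_def inverse_mult_distrib)
  define T where "T = (\<lambda>j p. \<Sum>u\<in>carrier G. \<Sum>v\<in>carrier G.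
      a j u * b p v * \<iota> u ^ p * c (k - j - p) (inv\<^bsub>G\<^esub> v \<otimes>\<^bsub>G\<^esub> (inv\<^bsub>G\<^esub> u \<otimes>\<^bsub>G\<^esub> x)) * \<iota> (u \<otimes>\<^bsub>G\<^esub> v) ^ (k - j - p))"
  show "H_mult G \<chi> n (H_mult G \<chi> n a b) c k x = H_mult G \<chi> n a (H_mult G \<chi> n b c) k x"
  proof (cases "k < n \<and> x \<in> carrier G")
    case False
    then show ?thesis by (auto simp: H_mult_def)
  next
    case True
    have L: "H_mult G \<chi> n (H_mult G \<chi> n a b) c k x = (\<Sum>i\<in>{0..k}. \<Sum>j\<in>{0..i}. T j (i - j))"
    proof -
      have "H_mult G \<chi> n (H_mult G \<chi> n a b) c k x = (\<Sum>i\<in>{0..k}. \<Sum>s\<in>carrier G.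
          (\<Sum>j\<in>{0..i}. \<Sum>u\<in>carrier G. a j u * b (i - j) (inv\<^bsub>G\<^esub> u \<otimes>\<^bsub>G\<^esub> s) * \<iota> u ^ (i - j))
             * c (k - i) (inv\<^bsub>G\<^esub> s \<otimes>\<^bsub>G\<^esub> x) * \<iota> s ^ (k - i))"
        using True by (auto simp: H_mult_def \<iota>_def intro!: sum.cong)
      also have "\<dots> = (\<Sum>i\<in>{0..k}. \<Sum>j\<in>{0..i}. \<Sum>u\<in>carrier G. \<Sum>s\<in>carrier G.
          a j u * b (i - j) (inv\<^bsub>G\<^esub> u \<otimes>\<^bsub>G\<^esub> s) * \<iota> u ^ (i - j)
             * c (k - i) (inv\<^bsub>G\<^esub> s \<otimes>\<^bsub>G\<^esub> x) * \<iota> s ^ (k - i))"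
        apply (rule sum.cong, simp)
        apply (simp add: sum_distrib_right)
        apply (rule swap3')
        done
      also have "\<dots> = (\<Sum>i\<in>{0..k}. \<Sum>j\<in>{0..i}. T j (i - j))"
      proof (rule sum.cong[OF refl], rule sum.cong[OF refl], unfold T_def, rule sum.cong[OF refl])
        fix i j u assume i: "i \<in> {0..k}" and j: "j \<in> {0..i}" and u: "u \<in> carrier G"
        have e: "k - j - (i - j) = k - i" using i j by auto
        show "(\<Sum>s\<in>carrier G. a j u * b (i - j) (inv\<^bsub>G\<^esub> u \<otimes>\<^bsub>G\<^esub> s) * \<iota> u ^ (i - j)
             * c (k - i) (inv\<^bsub>G\<^esub> s \<otimes>\<^bsub>G\<^esub> x) * \<iota> s ^ (k - i)) =
          (\<Sum>v\<in>carrier G. a j u * b (i - j) v * \<iota> u ^ (i - j) * c (k - j - (i - j)) (inv\<^bsub>G\<^esub> v \<otimes>\<^bsub>G\<^esub> (inv\<^bsub>G\<^esub> u \<otimes>\<^bsub>G\<^esub> x)) * \<iota> (u \<otimes>\<^bsub>G\<^esub> v) ^ (k - j - (i - j)))"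
          unfolding e
          apply (subst sum_group_reindex[OF grp u])
          apply (rule sum.cong[OF refl])
          using u True by (simp add: m_assoc[symmetric] inv_mult_group)
      qed
      finally show ?thesis .
    qed
    have R: "H_mult G \<chi> n a (H_mult G \<chi> n b c) k x = (\<Sum>j\<in>{0..k}. \<Sum>p\<in>{0..k-j}. T j p)"
    proof -
      have "H_mult G \<chi> n a (H_mult G \<chi> n b c) k x = (\<Sum>j\<in>{0..k}. \<Sum>u\<in>carrier G.
          a j u * (\<Sum>p\<in>{0..k-j}. \<Sum>v\<in>carrier G. b p v * c (k - j - p) (inv\<^bsub>G\<^esub> v \<otimes>\<^bsub>G\<^esub> (inv\<^bsub>G\<^esub> u \<otimes>\<^bsub>G\<^esub> x)) * \<iota> v ^ (k - j - p))
             * \<iota> u ^ (k - j))"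
        using True by (auto simp: H_mult_def \<iota>_def intro!: sum.cong)
      also have "\<dots> = (\<Sum>j\<in>{0..k}. \<Sum>p\<in>{0..k-j}. \<Sum>u\<in>carrier G. \<Sum>v\<in>carrier G.
          a j u * (b p v * c (k - j - p) (inv\<^bsub>G\<^esub> v \<otimes>\<^bsub>G\<^esub> (inv\<^bsub>G\<^esub> u \<otimes>\<^bsub>G\<^esub> x)) * \<iota> v ^ (k - j - p))
             * \<iota> u ^ (k - j))"
        apply (rule sum.cong, simp)
        apply (simp add: sum_distrib_right sum_distrib_left)
        apply (rule sum.swap)
        done
      also have "\<dots> = (\<Sum>j\<in>{0..k}. \<Sum>p\<in>{0..k-j}. T j p)"
      proof (rule sum.cong[OF refl], rule sum.cong[OF refl], unfold T_def, rule sum.cong[OF refl], rule sum.cong[OF refl])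
        fix j p u v assume j: "j \<in> {0..k}" and p: "p \<in> {0..k-j}" and u: "u \<in> carrier G" and v: "v \<in> carrier G"
        have e: "\<iota> u ^ (k - j) = \<iota> u ^ p * \<iota> u ^ (k - j - p)"
        proof -
          have "k - j = p + (k - j - p)" using p by auto
          then show ?thesis by (metis power_add)
        qed
        show "a j u * (b p v * c (k - j - p) (inv\<^bsub>G\<^esub> v \<otimes>\<^bsub>G\<^esub> (inv\<^bsub>G\<^esub> u \<otimes>\<^bsub>G\<^esub> x)) * \<iota> v ^ (k - j - p)) * \<iota> u ^ (k - j) =
          a j u * b p v * \<iota> u ^ p * c (k - j - p) (inv\<^bsub>G\<^esub> v \<otimes>\<^bsub>G\<^esub> (inv\<^bsub>G\<^esub> u \<otimes>\<^bsub>G\<^esub> x)) * \<iota> (u \<otimes>\<^bsub>G\<^esub> v) ^ (k - j - p)"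
          unfolding e \<iota>m[OF u v] power_mult_distrib by (simp add: ac_simps)
      qed
      finally show ?thesis .
    qed
    show ?thesis unfolding L R by (rule sum_tri)
  qed
qed

lemma sum_delta2:
  fixes F :: "'a \<Rightarrow> 'b \<Rightarrow> 'c::semiring_1"
  assumes "finite A" "finite B" "a \<in> A" "b \<in> B"
  shows "(\<Sum>i\<in>A. \<Sum>s\<in>B. (if i = a \<and> s = b then 1 else 0) * F i s) = F a b"
proof -
  have "\<And>i s. (if i = a \<and> s = b then 1 else 0) * F i s = (if s = b then (if i = a then F i s else 0) else 0)"
    by simp
  then show ?thesis using assms by (simp add: sum.delta)
qed

lemma H_l_one:
  fixes \<chi> :: "'g \<Rightarrow> 'k::field"
  assumes grp: "group G" and fin: "finite (carrier G)" and a: "a \<in> H_carrier G n" and chi1: "\<chi> \<one>\<^bsub>G\<^esub> = 1"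
  shows "H_mult G \<chi> n (\<lambda>i x. if i = 0 \<and> x = \<one>\<^bsub>G\<^esub> then 1 else 0) a = a"
proof (rule ext, rule ext)
  fix k x
  interpret group G by fact
  show "H_mult G \<chi> n (\<lambda>i x. if i = 0 \<and> x = \<one>\<^bsub>G\<^esub> then 1 else 0) a k x = a k x"
  proof (cases "k < n \<and> x \<in> carrier G")
    case False
    then show ?thesis using a by (auto simp: H_mult_def H_carrier_def)
  next
    case True
    have "H_mult G \<chi> n (\<lambda>i x. if i = 0 \<and> x = \<one>\<^bsub>G\<^esub> then 1 else 0) a k x
       = (\<Sum>i\<in>{0..k}. \<Sum>s\<in>carrier G. (if i = 0 \<and> s = \<one>\<^bsub>G\<^esub> then 1 else 0) * (a (k - i) (inv\<^bsub>G\<^esub> s \<otimes>\<^bsub>G\<^esub> x) * inverse (\<chi> s) ^ (k - i)))"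
      using True unfolding H_mult_def by (simp add: mult.assoc)
    also have "\<dots> = a (k - 0) (inv\<^bsub>G\<^esub> \<one>\<^bsub>G\<^esub> \<otimes>\<^bsub>G\<^esub> x) * inverse (\<chi> \<one>\<^bsub>G\<^esub>) ^ (k - 0)"
      by (rule sum_delta2) (use fin in auto)
    also have "\<dots> = a k x" using True chi1 by simp
    finally show ?thesis .
  qed
qed

lemma H_r_one:
  fixes \<chi> :: "'g \<Rightarrow> 'k::field"
  assumes grp: "group G" and fin: "finite (carrier G)" and a: "a \<in> H_carrier G n"
  shows "H_mult G \<chi> n a (\<lambda>i x. if i = 0 \<and> x = \<one>\<^bsub>G\<^esub> then 1 else 0) = a"
proof (rule ext, rule ext)
  fix k x
  interpret group G by fact
  show "H_mult G \<chi> n a (\<lambda>i x. if i = 0 \<and> x = \<one>\<^bsub>G\<^esub> then 1 else 0) k x = a k x"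
  proof (cases "k < n \<and> x \<in> carrier G")
    case False
    then show ?thesis using a by (auto simp: H_mult_def H_carrier_def)
  next
    case True
    have "H_mult G \<chi> n a (\<lambda>i x. if i = 0 \<and> x = \<one>\<^bsub>G\<^esub> then 1 else 0) k x
       = (\<Sum>i\<in>{0..k}. if i = k then (\<Sum>s\<in>carrier G. if s = x then a i s else 0) else 0)"
    proof (rule trans[OF _ sum.cong[OF refl]])
      show "H_mult G \<chi> n a (\<lambda>i x. if i = 0 \<and> x = \<one>\<^bsub>G\<^esub> then 1 else 0) k x
        = (\<Sum>i\<in>{0..k}. \<Sum>s\<in>carrier G. a i s * (if k - i = 0 \<and> inv\<^bsub>G\<^esub> s \<otimes>\<^bsub>G\<^esub> x = \<one>\<^bsub>G\<^esub> then 1 else 0) * inverse (\<chi> s) ^ (k - i))"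
        using True by (simp add: H_mult_def)
      fix i assume i: "i \<in> {0..k}"
      show "(\<Sum>s\<in>carrier G. a i s * (if k - i = 0 \<and> inv\<^bsub>G\<^esub> s \<otimes>\<^bsub>G\<^esub> x = \<one>\<^bsub>G\<^esub> then 1 else 0) * inverse (\<chi> s) ^ (k - i))
          = (if i = k then (\<Sum>s\<in>carrier G. if s = x then a i s else 0) else 0)"
      proof (cases "i = k")
        case True
        have "\<And>s. s \<in> carrier G \<Longrightarrow> (inv\<^bsub>G\<^esub> s \<otimes>\<^bsub>G\<^esub> x = \<one>\<^bsub>G\<^esub>) = (s = x)"
          using \<open>k < n \<and> x \<in> carrier G\<close>
          using inv_solve_left'[of "\<one>\<^bsub>G\<^esub>" _ x] by auto
        then show ?thesis using True by (auto intro!: sum.cong)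
      qed (use i in auto)
    qed
    also have "\<dots> = a k x" using True fin by (simp add: sum.delta)
    finally show ?thesis .
  qed
qed

lemma ring_H:
  fixes \<chi> :: "'g \<Rightarrow> 'k::field"
  assumes grp: "group G" and fin: "finite (carrier G)" and n: "0 < n"
    and chi1: "\<chi> \<one>\<^bsub>G\<^esub> = 1"
    and chi_hom: "\<forall>s\<in>carrier G. \<forall>u\<in>carrier G. \<chi> (s \<otimes>\<^bsub>G\<^esub> u) = \<chi> s * \<chi> u"
  shows "ring (H_alg G \<chi> n)"
proof (rule ringI)
  interpret group G by fact
  show "abelian_group (H_alg G \<chi> n)"
  proof (rule abelian_groupI)
    fix x assume x: "x \<in> carrier (H_alg G \<chi> n)"
    show "\<exists>y\<in>carrier (H_alg G \<chi> n). y \<oplus>\<^bsub>H_alg G \<chi> n\<^esub> x = \<zero>\<^bsub>H_alg G \<chi> n\<^esub>"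
      by (rule bexI[of _ "\<lambda>i s. - x i s"]) (use x in \<open>auto simp: H_alg_def H_carrier_def\<close>)
  qed (auto simp: H_alg_def H_carrier_def ac_simps)
  show "monoid (H_alg G \<chi> n)"
  proof (rule monoidI)
    show "\<one>\<^bsub>H_alg G \<chi> n\<^esub> \<in> carrier (H_alg G \<chi> n)" using n by (auto simp: H_alg_def H_carrier_def)
  next
    fix x y assume "x \<in> carrier (H_alg G \<chi> n)" "y \<in> carrier (H_alg G \<chi> n)"
    show "x \<otimes>\<^bsub>H_alg G \<chi> n\<^esub> y \<in> carrier (H_alg G \<chi> n)"
      by (auto simp: H_alg_def H_carrier_def H_mult_def)
  next
    fix x y z
    show "x \<otimes>\<^bsub>H_alg G \<chi> n\<^esub> y \<otimes>\<^bsub>H_alg G \<chi> n\<^esub> z = x \<otimes>\<^bsub>H_alg G \<chi> n\<^esub> (y \<otimes>\<^bsub>H_alg G \<chi> n\<^esub> z)"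
      by (simp add: H_alg_def H_assoc[OF grp chi_hom])
  next
    fix x assume "x \<in> carrier (H_alg G \<chi> n)"
    then have x: "x \<in> H_carrier G n" by (simp add: H_alg_def)
    show "\<one>\<^bsub>H_alg G \<chi> n\<^esub> \<otimes>\<^bsub>H_alg G \<chi> n\<^esub> x = x"
      using H_l_one[where G=G and \<chi>=\<chi> and n=n, OF grp fin x chi1] by (simp add: H_alg_def)
    show "x \<otimes>\<^bsub>H_alg G \<chi> n\<^esub> \<one>\<^bsub>H_alg G \<chi> n\<^esub> = x"
      using H_r_one[OF grp fin x] by (simp add: H_alg_def)
  qed
qed (auto simp: H_alg_def H_carrier_def H_mult_def algebra_simps sum.distrib intro!: ext)

lemma Z_mult:
  fixes \<chi> :: "'g \<Rightarrow> 'k::field"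
  assumes grp: "group G" and fin: "finite (carrier G)" and chi1: "\<chi> \<one>\<^bsub>G\<^esub> = 1"
    and w: "w \<in> H_carrier G n"
  shows "H_mult G \<chi> n (\<lambda>k y. if k = j \<and> y = \<one>\<^bsub>G\<^esub> \<and> j < n then 1 else 0) w
       = (\<lambda>k y. if k < n \<and> j \<le> k then w (k - j) y else 0)"
proof (rule ext, rule ext)
  fix k y
  interpret group G by fact
  show "H_mult G \<chi> n (\<lambda>k y. if k = j \<and> y = \<one>\<^bsub>G\<^esub> \<and> j < n then 1 else 0) w k y
       = (if k < n \<and> j \<le> k then w (k - j) y else 0)"
  proof (cases "k < n \<and> y \<in> carrier G")
    case False
    then show ?thesis using w by (auto simp: H_mult_def H_carrier_def)
  next
    case True
    have "H_mult G \<chi> n (\<lambda>k y. if k = j \<and> y = \<one>\<^bsub>G\<^esub> \<and> j < n then 1 else 0) w k y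
       = (\<Sum>i\<in>{0..k}. \<Sum>s\<in>carrier G. (if i = j \<and> s = \<one>\<^bsub>G\<^esub> then 1 else 0) * (w (k - i) (inv\<^bsub>G\<^esub> s \<otimes>\<^bsub>G\<^esub> y) * inverse (\<chi> s) ^ (k - i)))"
      using True \<open>k < n \<and> y \<in> carrier G\<close> unfolding H_mult_def
      by (auto simp: mult.assoc intro!: sum.cong)
    also have "\<dots> = (if j \<le> k then w (k - j) y else 0)"
    proof (cases "j \<le> k")
      case True
      have "(\<Sum>i\<in>{0..k}. \<Sum>s\<in>carrier G. (if i = j \<and> s = \<one>\<^bsub>G\<^esub> then 1 else 0) * (w (k - i) (inv\<^bsub>G\<^esub> s \<otimes>\<^bsub>G\<^esub> y) * inverse (\<chi> s) ^ (k - i)))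
          = w (k - j) (inv\<^bsub>G\<^esub> \<one>\<^bsub>G\<^esub> \<otimes>\<^bsub>G\<^esub> y) * inverse (\<chi> \<one>\<^bsub>G\<^esub>) ^ (k - j)"
        by (rule sum_delta2) (use fin True in auto)
      then show ?thesis using True \<open>k < n \<and> y \<in> carrier G\<close> chi1 by simp
    qed auto
    finally show ?thesis using True by simp
  qed
qed

lemma z_pow:
  fixes \<chi> :: "'g \<Rightarrow> 'k::field"
  assumes grp: "group G" and fin: "finite (carrier G)" and chi1: "\<chi> \<one>\<^bsub>G\<^esub> = 1" and n: "0 < n"
  shows "z_elem G n [^]\<^bsub>H_alg G \<chi> n\<^esub> j = (\<lambda>k y. if k = j \<and> y = \<one>\<^bsub>G\<^esub> \<and> j < n then 1 else 0)"
proof (induction j)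
  case 0
  then show ?case using n by (simp add: H_alg_def)
next
  case (Suc j)
  interpret group G by fact
  have zc: "z_elem G n \<in> H_carrier G n" by (auto simp: z_elem_def H_carrier_def)
  have "z_elem G n [^]\<^bsub>H_alg G \<chi> n\<^esub> Suc j = H_mult G \<chi> n (\<lambda>k y. if k = j \<and> y = \<one>\<^bsub>G\<^esub> \<and> j < n then 1 else 0) (z_elem G n)"
    using Suc by (simp add: H_alg_def)
  also have "\<dots> = (\<lambda>k y. if k < n \<and> j \<le> k then z_elem G n (k - j) y else 0)"
    by (rule Z_mult[where \<chi>=\<chi>, OF grp fin chi1 zc])
  also have "\<dots> = (\<lambda>k y. if k = Suc j \<and> y = \<one>\<^bsub>G\<^esub> \<and> Suc j < n then 1 else 0)"
    by (auto simp: z_elem_def intro!: ext)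
  finally show ?case .
qed

lemma z_pow_emb:
  fixes \<chi> :: "'g \<Rightarrow> 'k::field"
  assumes grp: "group G" and fin: "finite (carrier G)" and chi1: "\<chi> \<one>\<^bsub>G\<^esub> = 1" and n: "0 < n"
    and h: "h \<in> kG_carrier G" and j: "j < n"
  shows "z_elem G n [^]\<^bsub>H_alg G \<chi> n\<^esub> j \<otimes>\<^bsub>H_alg G \<chi> n\<^esub> kG_emb h = (\<lambda>k y. if k = j then h y else 0)"
proof -
  have e: "kG_emb h \<in> H_carrier G n" using h n by (auto simp: kG_emb_def H_carrier_def kG_carrier_def)
  have "z_elem G n [^]\<^bsub>H_alg G \<chi> n\<^esub> j \<otimes>\<^bsub>H_alg G \<chi> n\<^esub> kG_emb h
     = H_mult G \<chi> n (\<lambda>k y. if k = j \<and> y = \<one>\<^bsub>G\<^esub> \<and> j < n then 1 else 0) (kG_emb h)"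
    by (simp add: z_pow[where \<chi>=\<chi>, OF grp fin chi1 n]) (simp add: H_alg_def)
  also have "\<dots> = (\<lambda>k y. if k < n \<and> j \<le> k then kG_emb h (k - j) y else 0)"
    by (rule Z_mult[where \<chi>=\<chi>, OF grp fin chi1 e])
  also have "\<dots> = (\<lambda>k y. if k = j then h y else 0)"
    using j by (auto simp: kG_emb_def intro!: ext)
  finally show ?thesis .
qed

lemma finsum_H:
  fixes \<chi> :: "'g \<Rightarrow> 'k::field"
  assumes R: "ring (H_alg G \<chi> n)" and A: "finite A" and f: "f \<in> A \<rightarrow> carrier (H_alg G \<chi> n)"
  shows "finsum (H_alg G \<chi> n) f A = (\<lambda>k y. \<Sum>i\<in>A. f i k y)"
  using A f
proof (induction A rule: finite_induct)
  case empty
  interpret ring "H_alg G \<chi> n" by fact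
  show ?case unfolding finsum_empty by (simp add: H_alg_def)
next
  case (insert x F)
  interpret ring "H_alg G \<chi> n" by fact
  have "finsum (H_alg G \<chi> n) f (insert x F) = f x \<oplus>\<^bsub>H_alg G \<chi> n\<^esub> finsum (H_alg G \<chi> n) f F"
    using insert by (intro finsum_insert) auto
  also have "\<dots> = (\<lambda>k y. \<Sum>i\<in>insert x F. f i k y)"
    using insert by (simp add: H_alg_def)
  finally show ?case .
qed

lemma sum_only0:
  assumes "\<And>i. i \<in> {0..L} \<Longrightarrow> i \<noteq> c \<Longrightarrow> F i = (0::'a::comm_monoid_add)" "c \<le> (L::nat)"
  shows "(\<Sum>i\<in>{0..L}. F i) = F c"
proof -
  have "(\<Sum>i\<in>{0..L}. F i) = (\<Sum>i\<in>{0..L}. if i = c then F c else 0)"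
    using assms(1) by (intro sum.cong) auto
  also have "\<dots> = F c" using assms(2) by (simp add: sum.delta)
  finally show ?thesis .
qed

lemma J_ideal:
  fixes \<chi> :: "'g \<Rightarrow> 'k::field"
  fixes hL :: "'g \<Rightarrow> 'k"
  assumes R: "ring (H_alg G \<chi> n)" and L: "L < n"
  defines "J \<equiv> {w \<in> carrier (H_alg G \<chi> n). (\<forall>k<L. \<forall>y. w k y = 0) \<and> (\<lambda>y. w L y) \<in> genideal (group_algebra G) {hL}}"
  shows "ideal J (H_alg G \<chi> n)"
proof (rule idealI[OF R])
  interpret ring "H_alg G \<chi> n" by fact
  have lclosed: "x \<otimes>\<^bsub>H_alg G \<chi> n\<^esub> w \<in> J" if w: "w \<in> J" and x: "x \<in> carrier (H_alg G \<chi> n)" for w x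
  proof -
    have xc: "x \<in> H_carrier G n" using x by (simp add: H_alg_def)
    have wz: "\<forall>k<L. \<forall>y. w k y = 0" and wI: "(\<lambda>y. w L y) \<in> genideal (group_algebra G) {hL}"
      using w by (auto simp: J_def)
    have "(\<forall>k<L. \<forall>y. H_mult G \<chi> n x w k y = 0)"
      using wz by (auto simp: H_mult_def intro!: sum.neutral)
    moreover have "(\<lambda>y. H_mult G \<chi> n x w L y) = kG_mult G (\<lambda>s. x 0 s * inverse (\<chi> s) ^ L) (\<lambda>y. w L y)"
    proof (rule ext)
      fix y
      show "H_mult G \<chi> n x w L y = kG_mult G (\<lambda>s. x 0 s * inverse (\<chi> s) ^ L) (\<lambda>y. w L y) y"
      proof (cases "y \<in> carrier G")
        case True
        have "H_mult G \<chi> n x w L y = (\<Sum>i\<in>{0..L}. \<Sum>s\<in>carrier G. x i s * w (L - i) (inv\<^bsub>G\<^esub> s \<otimes>\<^bsub>G\<^esub> y) * inverse (\<chi> s) ^ (L - i))"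
          using True L by (simp add: H_mult_def)
        also have "\<dots> = (\<Sum>s\<in>carrier G. x 0 s * w (L - 0) (inv\<^bsub>G\<^esub> s \<otimes>\<^bsub>G\<^esub> y) * inverse (\<chi> s) ^ (L - 0))"
          by (rule sum_only0) (use wz in auto)
        finally show ?thesis using True by (simp add: kG_mult_def ac_simps)
      qed (simp add: H_mult_def kG_mult_def)
    qed
    moreover have "kG_mult G (\<lambda>s. x 0 s * inverse (\<chi> s) ^ L) (\<lambda>y. w L y) \<in> genideal (group_algebra G) {hL}"
      unfolding genideal_def
    proof (rule InterI)
      fix I assume "I \<in> {I. ideal I (group_algebra G) \<and> {hL} \<subseteq> I}"
      then have I: "ideal I (group_algebra G)" and hI: "hL \<in> I" by auto
      have "(\<lambda>y. w L y) \<in> I" using wI I hI unfolding genideal_def by auto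
      moreover have "(\<lambda>s. x 0 s * inverse (\<chi> s) ^ L) \<in> carrier (group_algebra G)"
        using xc by (auto simp: group_algebra_def kG_carrier_def H_carrier_def)
      ultimately have "(\<lambda>s. x 0 s * inverse (\<chi> s) ^ L) \<otimes>\<^bsub>group_algebra G\<^esub> (\<lambda>y. w L y) \<in> I"
        using ideal.I_l_closed[OF I] by blast
      then show "kG_mult G (\<lambda>s. x 0 s * inverse (\<chi> s) ^ L) (\<lambda>y. w L y) \<in> I"
        by (simp add: group_algebra_def)
    qed
    moreover have "x \<otimes>\<^bsub>H_alg G \<chi> n\<^esub> w \<in> carrier (H_alg G \<chi> n)"
      using w x by (auto simp: J_def)
    ultimately show ?thesis by (simp add: J_def H_alg_def)
  qed
  show "\<And>a x. a \<in> J \<Longrightarrow> x \<in> carrier (H_alg G \<chi> n) \<Longrightarrow> x \<otimes>\<^bsub>H_alg G \<chi> n\<^esub> a \<in> J"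
    using lclosed by blast
  show "\<And>a x. a \<in> J \<Longrightarrow> x \<in> carrier (H_alg G \<chi> n) \<Longrightarrow> a \<otimes>\<^bsub>H_alg G \<chi> n\<^esub> x \<in> J"
  proof -
    fix w x assume w: "w \<in> J" and x: "x \<in> carrier (H_alg G \<chi> n)"
    have xc: "x \<in> H_carrier G n" using x by (simp add: H_alg_def)
    have wz: "\<forall>k<L. \<forall>y. w k y = 0" and wI: "(\<lambda>y. w L y) \<in> genideal (group_algebra G) {hL}"
      using w by (auto simp: J_def)
    have "(\<forall>k<L. \<forall>y. H_mult G \<chi> n w x k y = 0)"
      using wz by (auto simp: H_mult_def intro!: sum.neutral)
    moreover have "(\<lambda>y. H_mult G \<chi> n w x L y) = kG_mult G (\<lambda>y. w L y) (x 0)"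
    proof (rule ext)
      fix y
      show "H_mult G \<chi> n w x L y = kG_mult G (\<lambda>y. w L y) (x 0) y"
      proof (cases "y \<in> carrier G")
        case True
        have "H_mult G \<chi> n w x L y = (\<Sum>i\<in>{0..L}. \<Sum>s\<in>carrier G. w i s * x (L - i) (inv\<^bsub>G\<^esub> s \<otimes>\<^bsub>G\<^esub> y) * inverse (\<chi> s) ^ (L - i))"
          using True L by (simp add: H_mult_def)
        also have "\<dots> = (\<Sum>s\<in>carrier G. w L s * x (L - L) (inv\<^bsub>G\<^esub> s \<otimes>\<^bsub>G\<^esub> y) * inverse (\<chi> s) ^ (L - L))"
          by (rule sum_only0) (use wz in auto)
        finally show ?thesis using True by (simp add: kG_mult_def ac_simps)
      qed (simp add: H_mult_def kG_mult_def)
    qed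
    moreover have "kG_mult G (\<lambda>y. w L y) (x 0) \<in> genideal (group_algebra G) {hL}"
      unfolding genideal_def
    proof (rule InterI)
      fix I assume "I \<in> {I. ideal I (group_algebra G) \<and> {hL} \<subseteq> I}"
      then have I: "ideal I (group_algebra G)" and hI: "hL \<in> I" by auto
      have "(\<lambda>y. w L y) \<in> I" using wI I hI unfolding genideal_def by auto
      moreover have "x 0 \<in> carrier (group_algebra G)"
        using xc by (auto simp: group_algebra_def kG_carrier_def H_carrier_def)
      ultimately have "(\<lambda>y. w L y) \<otimes>\<^bsub>group_algebra G\<^esub> x 0 \<in> I"
        using ideal.I_r_closed[OF I] by blast
      then show "kG_mult G (\<lambda>y. w L y) (x 0) \<in> I"
        by (simp add: group_algebra_def)
    qed
    moreover have "w \<otimes>\<^bsub>H_alg G \<chi> n\<^esub> x \<in> carrier (H_alg G \<chi> n)"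
      using w x by (auto simp: J_def)
    ultimately show "w \<otimes>\<^bsub>H_alg G \<chi> n\<^esub> x \<in> J" by (simp add: J_def H_alg_def)
  qed
  show "subgroup J (add_monoid (H_alg G \<chi> n))"
  proof
    show "J \<subseteq> carrier (add_monoid (H_alg G \<chi> n))" by (auto simp: J_def)
  next
    fix v w assume v: "v \<in> J" and w: "w \<in> J"
    show "v \<otimes>\<^bsub>add_monoid (H_alg G \<chi> n)\<^esub> w \<in> J"
    proof -
      have "(\<lambda>y. v L y + w L y) \<in> genideal (group_algebra G) {hL}"
        unfolding genideal_def
      proof (rule InterI)
        fix I assume "I \<in> {I. ideal I (group_algebra G) \<and> {hL} \<subseteq> I}"
        then have I: "ideal I (group_algebra G)" and hI: "hL \<in> I" by auto
        have "(\<lambda>y. v L y) \<in> I" "(\<lambda>y. w L y) \<in> I" using v w I hI unfolding genideal_def J_def by auto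
        then have "(\<lambda>y. v L y) \<oplus>\<^bsub>group_algebra G\<^esub> (\<lambda>y. w L y) \<in> I"
          using additive_subgroup.a_closed[OF ideal.axioms(1)[OF I]] by blast
        then show "(\<lambda>y. v L y + w L y) \<in> I" by (simp add: group_algebra_def)
      qed
      then show ?thesis using v w by (auto simp: J_def H_alg_def H_carrier_def)
    qed
  next
    show "\<one>\<^bsub>add_monoid (H_alg G \<chi> n)\<^esub> \<in> J"
    proof -
      have "(\<lambda>y. 0) \<in> genideal (group_algebra G) {hL}"
        unfolding genideal_def
      proof (rule InterI)
        fix I assume "I \<in> {I. ideal I (group_algebra G) \<and> {hL} \<subseteq> I}"
        then have I: "ideal I (group_algebra G)" by auto
        have "\<zero>\<^bsub>group_algebra G\<^esub> \<in> I"
          using additive_subgroup.zero_closed[OF ideal.axioms(1)[OF I]] by blast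
        then show "(\<lambda>y. 0) \<in> I" by (simp add: group_algebra_def)
      qed
      then show ?thesis by (auto simp: J_def H_alg_def H_carrier_def)
    qed
  next
    fix w assume w: "w \<in> J"
    have wc: "w \<in> carrier (H_alg G \<chi> n)" using w by (simp add: J_def)
    have "inv\<^bsub>add_monoid (H_alg G \<chi> n)\<^esub> w = \<ominus>\<^bsub>H_alg G \<chi> n\<^esub> w" by (simp add: a_inv_def)
    also have "\<dots> = (\<ominus>\<^bsub>H_alg G \<chi> n\<^esub> \<one>\<^bsub>H_alg G \<chi> n\<^esub>) \<otimes>\<^bsub>H_alg G \<chi> n\<^esub> w"
      using wc by (simp add: l_minus)
    finally show "inv\<^bsub>add_monoid (H_alg G \<chi> n)\<^esub> w \<in> J"
      using lclosed[OF w] by simp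
  qed
qed

lemma transfer:
  fixes \<chi> :: "'g \<Rightarrow> 'k::field"
  assumes R: "ring (H_alg G \<chi> n)" and L: "L < n" and x: "x \<in> carrier (H_alg G \<chi> n)"
    and xz: "\<forall>k<L. \<forall>y. x k y = 0" and w: "w \<in> genideal (H_alg G \<chi> n) {x}"
  shows "(\<forall>k<L. \<forall>y. w k y = 0) \<and> (\<lambda>y. w L y) \<in> genideal (group_algebra G) {\<lambda>y. x L y}"
proof -
  define J where "J = {w \<in> carrier (H_alg G \<chi> n). (\<forall>k<L. \<forall>y. w k y = 0) \<and> (\<lambda>y. w L y) \<in> genideal (group_algebra G) {\<lambda>y. x L y}}"
  have "ideal J (H_alg G \<chi> n)" unfolding J_def by (rule J_ideal[OF R L])
  moreover have "x \<in> J" using x xz unfolding J_def genideal_def by auto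
  ultimately have "genideal (H_alg G \<chi> n) {x} \<subseteq> J" unfolding genideal_def by auto
  then show ?thesis using w unfolding J_def by auto
qed

lemma dec_chain:
  fixes l :: "nat \<Rightarrow> nat"
  assumes "\<forall>i\<in>{1..<t}. l i > l (Suc i)" "1 \<le> i"
  shows "i < j \<Longrightarrow> j \<le> t \<Longrightarrow> l j < l i"
proof (induction j)
  case 0 then show ?case by simp
next
  case (Suc j)
  show ?case
  proof (cases "i = j")
    case True
    then show ?thesis using assms Suc.prems by auto
  next
    case False
    then have "l j < l i" using Suc by auto
    moreover have "l (Suc j) < l j" using assms Suc.prems False by auto
    ultimately show ?thesis by simp
  qed
qed

lemma elem_props:
  fixes \<chi> :: "'g \<Rightarrow> 'k::field" and l :: "nat \<Rightarrow> nat" and h :: "nat \<Rightarrow> 'g \<Rightarrow> 'k"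
  assumes R: "ring (H_alg G \<chi> n)" and grp: "group G" and fin: "finite (carrier G)"
    and chi1: "\<chi> \<one>\<^bsub>G\<^esub> = 1" and n: "2 \<le> n"
    and t_pos: "t \<ge> 1" and l_bound: "l 1 \<le> n - 1"
    and l_dec: "\<forall>i\<in>{1..<t}. l i > l (Suc i)"
    and h_in: "\<forall>i\<in>{1..t}. h i \<in> carrier (group_algebra G)"
  defines "X \<equiv> \<Oplus>\<^bsub>H_alg G \<chi> n\<^esub>i\<in>{1..t}. z_elem G n [^]\<^bsub>H_alg G \<chi> n\<^esub> l i
                   \<otimes>\<^bsub>H_alg G \<chi> n\<^esub> kG_emb (h i)"
  shows "X \<in> carrier (H_alg G \<chi> n) \<and> (\<forall>k<l t. \<forall>y. X k y = 0) \<and> (\<lambda>y. X (l t) y) = h t"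
proof -
  interpret ring "H_alg G \<chi> n" by fact
  have ge: "l t \<le> l i" if "i \<in> {1..t}" for i
    using dec_chain[OF l_dec, of i t] that by (cases "i = t") auto
  have gt: "l t < l i" if "i \<in> {1..t}" "i \<noteq> t" for i
    using dec_chain[OF l_dec, of i t] that by auto
  have lt: "l i < n" if "i \<in> {1..t}" for i
  proof -
    have "l i \<le> l 1" using dec_chain[OF l_dec, of 1 i] that by (cases "i = 1") auto
    then show ?thesis using l_bound n by linarith
  qed
  have terms: "z_elem G n [^]\<^bsub>H_alg G \<chi> n\<^esub> l i \<otimes>\<^bsub>H_alg G \<chi> n\<^esub> kG_emb (h i) = (\<lambda>k y. if k = l i then h i y else 0)"
    if "i \<in> {1..t}" for i
    by (rule z_pow_emb[where \<chi>=\<chi>, OF grp fin chi1 _ _ lt[OF that]])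
       (use n h_in that in \<open>auto simp: group_algebra_def\<close>)
  have cl: "(\<lambda>i. z_elem G n [^]\<^bsub>H_alg G \<chi> n\<^esub> l i \<otimes>\<^bsub>H_alg G \<chi> n\<^esub> kG_emb (h i)) \<in> {1..t} \<rightarrow> carrier (H_alg G \<chi> n)"
    by (auto simp: H_alg_def H_carrier_def H_mult_def)
  have X: "X = (\<lambda>k y. \<Sum>i\<in>{1..t}. (z_elem G n [^]\<^bsub>H_alg G \<chi> n\<^esub> l i \<otimes>\<^bsub>H_alg G \<chi> n\<^esub> kG_emb (h i)) k y)"
    unfolding X_def by (rule finsum_H[OF R _ cl]) simp
  have Xc: "X \<in> carrier (H_alg G \<chi> n)" unfolding X_def using cl by (intro finsum_closed) auto
  have X2: "X k y = (\<Sum>i\<in>{1..t}. if k = l i then h i y else 0)" for k y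
    unfolding X using terms by (auto intro!: sum.cong)
  have "\<forall>k<l t. \<forall>y. X k y = 0"
    using ge by (auto simp: X2 intro!: sum.neutral) (meson leD)
  moreover have "X (l t) y = h t y" for y
  proof -
    have "X (l t) y = (\<Sum>i\<in>{1..t}. if i = t then h t y else 0)"
    proof (unfold X2, rule sum.cong[OF refl])
      fix i assume i: "i \<in> {1..t}"
      show "(if l t = l i then h i y else 0) = (if i = t then h t y else 0)"
        using gt[OF i] by (cases "i = t") auto
    qed
    then show ?thesis using t_pos by (simp add: sum.delta)
  qed
  ultimately show ?thesis using Xc by auto
qed


theorem proposition3p5:
  fixes G :: "'g monoid" and \<chi> :: "'g \<Rightarrow> 'k::field_char_0" and g :: 'g and n :: nat
    and t r :: nat and l m :: "nat \<Rightarrow> nat" and h a :: "nat \<Rightarrow> 'g \<Rightarrow> 'k"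
  assumes alg_closed: "\<forall>p :: 'k poly. degree p > 0 \<longrightarrow> (\<exists>x. poly p x = 0)"
    and grp: "group G" and fin: "finite (carrier G)"
    and chi_nz: "\<forall>s\<in>carrier G. \<chi> s \<noteq> 0"
    and chi_hom: "\<forall>s\<in>carrier G. \<forall>u\<in>carrier G. \<chi> (s \<otimes>\<^bsub>G\<^esub> u) = \<chi> s * \<chi> u"
    and g_in: "g \<in> carrier G" and g_central: "\<forall>s\<in>carrier G. g \<otimes>\<^bsub>G\<^esub> s = s \<otimes>\<^bsub>G\<^esub> g"
    and n_def: "n = mult_ord (\<chi> g)" and n_ge: "n \<ge> 2"
    and t_pos: "t \<ge> 1" and l_bound: "l 1 \<le> n - 1"
    and l_dec: "\<forall>i\<in>{1..<t}. l i > l (Suc i)"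
    and h_in: "\<forall>i\<in>{1..t}. h i \<in> carrier (group_algebra G)"
    and r_pos: "r \<ge> 1" and m_bound: "m 1 \<le> n - 1"
    and m_dec: "\<forall>j\<in>{1..<r}. m j > m (Suc j)"
    and a_in: "\<forall>j\<in>{1..r}. a j \<in> carrier (group_algebra G)"
    and ht_nz: "h t \<noteq> \<zero>\<^bsub>group_algebra G\<^esub>" and ar_nz: "a r \<noteq> \<zero>\<^bsub>group_algebra G\<^esub>"
    and eq: "genideal (H_alg G \<chi> n)
               {\<Oplus>\<^bsub>H_alg G \<chi> n\<^esub>i\<in>{1..t}. z_elem G n [^]\<^bsub>H_alg G \<chi> n\<^esub> l i
                   \<otimes>\<^bsub>H_alg G \<chi> n\<^esub> kG_emb (h i)}
           = genideal (H_alg G \<chi> n)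
               {\<Oplus>\<^bsub>H_alg G \<chi> n\<^esub>j\<in>{1..r}. z_elem G n [^]\<^bsub>H_alg G \<chi> n\<^esub> m j
                   \<otimes>\<^bsub>H_alg G \<chi> n\<^esub> kG_emb (a j)}"
  shows "l t = m r \<and> genideal (group_algebra G) {h t} = genideal (group_algebra G) {a r}"
proof -
  interpret group G by (rule grp)
  have chi1: "\<chi> \<one>\<^bsub>G\<^esub> = 1"
  proof -
    have "\<chi> \<one>\<^bsub>G\<^esub> = \<chi> \<one>\<^bsub>G\<^esub> * \<chi> \<one>\<^bsub>G\<^esub>" using chi_hom by (metis one_closed l_one)
    moreover have "\<chi> \<one>\<^bsub>G\<^esub> \<noteq> 0" using chi_nz by simp
    ultimately show ?thesis by (metis mult_cancel_left1)
  qed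
  have R: "ring (H_alg G \<chi> n)" by (rule ring_H[OF grp fin _ chi1 chi_hom]) (use n_ge in simp)
  define X where "X = (\<Oplus>\<^bsub>H_alg G \<chi> n\<^esub>i\<in>{1..t}. z_elem G n [^]\<^bsub>H_alg G \<chi> n\<^esub> l i
                   \<otimes>\<^bsub>H_alg G \<chi> n\<^esub> kG_emb (h i))"
  define Y where "Y = (\<Oplus>\<^bsub>H_alg G \<chi> n\<^esub>j\<in>{1..r}. z_elem G n [^]\<^bsub>H_alg G \<chi> n\<^esub> m j
                   \<otimes>\<^bsub>H_alg G \<chi> n\<^esub> kG_emb (a j))"
  have PX: "X \<in> carrier (H_alg G \<chi> n) \<and> (\<forall>k<l t. \<forall>y. X k y = 0) \<and> (\<lambda>y. X (l t) y) = h t"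
    unfolding X_def by (rule elem_props[OF R grp fin chi1 n_ge t_pos l_bound l_dec h_in])
  have PY: "Y \<in> carrier (H_alg G \<chi> n) \<and> (\<forall>k<m r. \<forall>y. Y k y = 0) \<and> (\<lambda>y. Y (m r) y) = a r"
    unfolding Y_def by (rule elem_props[OF R grp fin chi1 n_ge r_pos m_bound m_dec a_in])
  have eqXY: "genideal (H_alg G \<chi> n) {X} = genideal (H_alg G \<chi> n) {Y}"
    using eq unfolding X_def Y_def .
  have Lt: "l t < n"
  proof -
    have "l t \<le> l 1" using dec_chain[OF l_dec, of 1 t] t_pos by (cases "t = 1") auto
    then show ?thesis using l_bound n_ge by linarith
  qed
  have Mr: "m r < n"
  proof -
    have "m r \<le> m 1" using dec_chain[OF m_dec, of 1 r] r_pos by (cases "r = 1") auto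
    then show ?thesis using m_bound n_ge by linarith
  qed
  have "Y \<in> genideal (H_alg G \<chi> n) {Y}" unfolding genideal_def by auto
  then have YinX: "Y \<in> genideal (H_alg G \<chi> n) {X}" using eqXY by simp
  have "X \<in> genideal (H_alg G \<chi> n) {X}" unfolding genideal_def by auto
  then have XinY: "X \<in> genideal (H_alg G \<chi> n) {Y}" using eqXY by simp
  have T1: "(\<forall>k<l t. \<forall>y. Y k y = 0) \<and> (\<lambda>y. Y (l t) y) \<in> genideal (group_algebra G) {\<lambda>y. X (l t) y}"
    by (rule transfer[OF R Lt _ _ YinX]) (use PX in auto)
  have T2: "(\<forall>k<m r. \<forall>y. X k y = 0) \<and> (\<lambda>y. X (m r) y) \<in> genideal (group_algebra G) {\<lambda>y. Y (m r) y}"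
    by (rule transfer[OF R Mr _ _ XinY]) (use PY in auto)
  have ar0: "a r \<noteq> (\<lambda>y. 0)" using ar_nz by (simp add: group_algebra_def)
  have ht0: "h t \<noteq> (\<lambda>y. 0)" using ht_nz by (simp add: group_algebra_def)
  have le1: "l t \<le> m r"
  proof (rule ccontr)
    assume "\<not> l t \<le> m r"
    then have "(\<lambda>y. Y (m r) y) = (\<lambda>y. 0)" using T1 by auto
    then show False using PY ar0 by simp
  qed
  have le2: "m r \<le> l t"
  proof (rule ccontr)
    assume "\<not> m r \<le> l t"
    then have "(\<lambda>y. X (l t) y) = (\<lambda>y. 0)" using T2 by auto
    then show False using PX ht0 by simp
  qed
  have E: "l t = m r" using le1 le2 by simp
  have A1: "a r \<in> genideal (group_algebra G) {h t}" using T1 PX PY E by simp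
  have A2: "h t \<in> genideal (group_algebra G) {a r}" using T2 PX PY E by simp
  have "genideal (group_algebra G) {a r} \<subseteq> genideal (group_algebra G) {h t}"
    using A1 unfolding genideal_def by blast
  moreover have "genideal (group_algebra G) {h t} \<subseteq> genideal (group_algebra G) {a r}"
    using A2 unfolding genideal_def by blast
  ultimately show ?thesis using E by blast
qed

end
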